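(* Let $N \ge 1$ and let $(\mathbf{x}_1,y_1),\dots,(\mathbf{x}_N,y_N)$ be labeled data points with labels in $\{1,\dots,C\}$. Let $\hat{P'}(y\mid\mathbf{x})$ and $\hat{P}(y\mid\mathbf{x};\theta_t)$ be conditional probability distributions over the labels, with $\hat{P}(y_i\mid\mathbf{x}_i;\theta_t) > 0$ for every $i$. Define the Dynamic Importance Loss $$\mathcal{L}_{\text{DIMP}}(\theta_t, D_Q) = -\frac{1}{N}\sum_{i=1}^{N} \frac{\hat{P'}(y_i\mid\mathbf{x}_i)}{\hat{P}(y_i\mid\mathbf{x}_i;\theta_t)} \log \hat{P}(y_i\mid\mathbf{x}_i;\theta_t).$$ Then $$\mathcal{L}_{\text{DIMP}}(\theta_t, D_Q) \ \ge\ -\frac{2}{N}\sum_{i=1}^{N}\hat{P'}(y_i\mid\mathbf{x}_i)\log \hat{P}(y_i\mid\mathbf{x}_i;\theta_t) \;+\; \frac{1}{N}\sum_{i=1}^{N}\hat{P}(y_i\mid\mathbf{x}_i;\theta_t)\log \hat{P}(y_i\mid\mathbf{x}_i;\theta_t).$$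
   Context: $D_Q=\{(\mathbf{x}_i,y_i)\}_{i=1}^N$ is a (synthetic) training set. $\hat{P'}(y\mid\mathbf{x})$ is a fixed classifier's predicted probability of label $y$ given input $\mathbf{x}$ (trained on a small real-world dataset), and $\hat{P}(y\mid\mathbf{x};\theta_t)$ is the predicted probability of the model being trained, with parameters $\theta_t$ at optimization step $t$. $\log$ denotes the natural logarithm. *)

theory Defs
  imports "HOL-Analysis.Analysis"
begin

definition cond_dist :: "nat \<Rightarrow> ('x \<Rightarrow> nat \<Rightarrow> real) \<Rightarrow> bool" where
  "cond_dist C P \<longleftrightarrow> (\<forall>x. (\<forall>c\<in>{1..C}. P x c \<ge> 0) \<and> (\<Sum>c=1..C. P x c) = 1)"

text \<open>Dynamic Importance Loss; the model P already has its parameters theta_t fixed.\<close>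
definition L_DIMP :: "nat \<Rightarrow> (nat \<Rightarrow> 'x) \<Rightarrow> (nat \<Rightarrow> nat) \<Rightarrow>
    ('x \<Rightarrow> nat \<Rightarrow> real) \<Rightarrow> ('x \<Rightarrow> nat \<Rightarrow> real) \<Rightarrow> real" where
  "L_DIMP N xs ys P' P =
     - (1 / real N) * (\<Sum>i=1..N. (P' (xs i) (ys i) / P (xs i) (ys i)) * ln (P (xs i) (ys i)))"

end

theory Submission
  imports Defs
begin

lemma le_one_dist:
  assumes "cond_dist C P" "c \<in> {1..C}"
  shows "P x c \<le> 1"
proof -
  have nn: "\<forall>c\<in>{1..C}. P x c \<ge> 0" and s: "(\<Sum>c=1..C. P x c) = 1"
    using assms(1) unfolding cond_dist_def by auto
  have "P x c \<le> (\<Sum>c=1..C. P x c)"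
    by (rule member_le_sum) (use nn assms(2) in auto)
  with s show ?thesis by simp
qed

lemma nn_dist:
  assumes "cond_dist C P" "c \<in> {1..C}"
  shows "P x c \<ge> 0"
  using assms unfolding cond_dist_def by auto

lemma pointwise:
  fixes p q :: real
  assumes "0 < p" "p \<le> 1" "0 \<le> q" "q \<le> 1"
  shows "q / p * ln p \<le> 2 * q * ln p - p * ln p"
proof -
  have l: "ln p \<le> 0" using assms by simp
  have "q * (1 - 2*p) + p^2 \<ge> 0"
  proof (cases "p \<le> 1/2")
    case True
    have "q * (1 - 2*p) \<ge> 0" using True assms by simp
    then show ?thesis by (smt (verit) zero_le_power2)
  next
    case False
    have "q * (1 - 2*p) \<ge> 1 * (1 - 2*p)" using False assms
      by (intro mult_right_mono_neg) auto
    moreover have "(1 - p)^2 \<ge> 0" by simp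
    ultimately show ?thesis by (simp add: power2_eq_square algebra_simps)
  qed
  hence "q / p - 2*q + p \<ge> 0" using assms
    by (simp add: field_simps power2_eq_square)
  hence "(q / p - 2*q + p) * ln p \<le> 0" using l
    by (simp add: mult_nonneg_nonpos)
  thus ?thesis by (simp add: algebra_simps)
qed

theorem mainTheorem1:
  fixes N C :: nat and xs :: "nat \<Rightarrow> 'x" and ys :: "nat \<Rightarrow> nat"
    and P' P :: "'x \<Rightarrow> nat \<Rightarrow> real"
  assumes "N \<ge> 1"
    and "\<forall>i\<in>{1..N}. ys i \<in> {1..C}"
    and "cond_dist C P'" and "cond_dist C P"
    and "\<forall>i\<in>{1..N}. P (xs i) (ys i) > 0"
  shows "L_DIMP N xs ys P' P \<ge>
           - (2 / real N) * (\<Sum>i=1..N. P' (xs i) (ys i) * ln (P (xs i) (ys i)))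
           + (1 / real N) * (\<Sum>i=1..N. P (xs i) (ys i) * ln (P (xs i) (ys i)))"
proof -
  let ?f = "\<lambda>i. (P' (xs i) (ys i) / P (xs i) (ys i)) * ln (P (xs i) (ys i))"
  let ?g = "\<lambda>i. 2 * P' (xs i) (ys i) * ln (P (xs i) (ys i)) - P (xs i) (ys i) * ln (P (xs i) (ys i))"
  have "(\<Sum>i=1..N. ?f i) \<le> (\<Sum>i=1..N. ?g i)"
  proof (rule sum_mono)
    fix i assume i: "i \<in> {1..N}"
    hence y: "ys i \<in> {1..C}" using assms(2) by auto
    show "?f i \<le> ?g i"
      by (rule pointwise) (use assms(5) i y le_one_dist[OF assms(4) y] le_one_dist[OF assms(3) y]
          nn_dist[OF assms(3) y] in auto)
  qed
  also have "(\<Sum>i=1..N. ?g i) = 2 * (\<Sum>i=1..N. P' (xs i) (ys i) * ln (P (xs i) (ys i)))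
      - (\<Sum>i=1..N. P (xs i) (ys i) * ln (P (xs i) (ys i)))"
    by (simp add: sum_subtractf sum_distrib_left mult.assoc)
  finally have h: "(\<Sum>i=1..N. ?f i) \<le> \<dots>" .
  have N: "real N > 0" using assms(1) by simp
  have "(1 / real N) * (\<Sum>i=1..N. ?f i) \<le> (1 / real N) * (2 * (\<Sum>i=1..N. P' (xs i) (ys i) * ln (P (xs i) (ys i)))
      - (\<Sum>i=1..N. P (xs i) (ys i) * ln (P (xs i) (ys i))))"
    using h N by (intro mult_left_mono) auto
  then show ?thesis unfolding L_DIMP_def by (simp add: algebra_simps)
qed

end
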